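(* Let $X$ be an Alexandroff space, $Y$ a topological space, and $f:X\to Y$ a map. Then $f$ has closed graph if and only if for every connected component $C$ of $X$, $f(C)$ is a singleton $\{y\}$ with $y$ a closed point of $Y$.
   Context: For a map $f:X\to Y$ its graph is $G_f=\{(x,f(x)):x\in X\}$; $f$ has closed graph if $G_f$ is closed in $X\times Y$ (product topology). A point $y\in Y$ is closed if $\{y\}$ is a closed set. A topological space $X$ is an Alexandroff space if the intersection of every nonempty family of open subsets of $X$ is open; equivalently, every point $a\in X$ has a smallest open neighbourhood, denoted $V_a$. *)

theory Defs
  imports "HOL-Analysis.Analysis"
begin

definition alexandroff_space :: "'a topology \<Rightarrow> bool" where
  "alexandroff_space X \<longleftrightarrow>
     (\<forall>\<F>. \<F> \<noteq> {} \<and> (\<forall>U\<in>\<F>. openin X U) \<longrightarrow> openin X (\<Inter>\<F>))"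

definition graph_of :: "'a topology \<Rightarrow> ('a \<Rightarrow> 'b) \<Rightarrow> ('a \<times> 'b) set" where
  "graph_of X f = {(x, f x) | x. x \<in> topspace X}"

definition closed_graph :: "'a topology \<Rightarrow> 'b topology \<Rightarrow> ('a \<Rightarrow> 'b) \<Rightarrow> bool" where
  "closed_graph X Y f \<longleftrightarrow> closedin (prod_topology X Y) (graph_of X f)"

end

theory Submission
  imports Defs
begin

lemma alex_nbhd:
  assumes A: "alexandroff_space X" and x: "x \<in> topspace X"
  defines "V \<equiv> \<Inter>{U. openin X U \<and> x \<in> U}"
  shows "openin X V" "x \<in> V" "\<And>U. openin X U \<Longrightarrow> x \<in> U \<Longrightarrow> V \<subseteq> U" "connectedin X V"
proof -
  show o: "openin X V" unfolding V_def using A x unfolding alexandroff_space_def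
    by (metis (mono_tags, lifting) empty_iff mem_Collect_eq openin_topspace)
  show xv: "x \<in> V" unfolding V_def by blast
  show sub: "\<And>U. openin X U \<Longrightarrow> x \<in> U \<Longrightarrow> V \<subseteq> U" unfolding V_def by blast
  show "connectedin X V"
    unfolding connectedin
  proof (intro conjI notI)
    show "V \<subseteq> topspace X" using o openin_subset by blast
  next
    assume "\<exists>E1 E2. openin X E1 \<and> openin X E2 \<and> V \<subseteq> E1 \<union> E2 \<and> E1 \<inter> E2 \<inter> V = {} \<and> E1 \<inter> V \<noteq> {} \<and> E2 \<inter> V \<noteq> {}"
    then obtain E1 E2 where e: "openin X E1" "openin X E2" "V \<subseteq> E1 \<union> E2" "E1 \<inter> E2 \<inter> V = {}"
      "E1 \<inter> V \<noteq> {}" "E2 \<inter> V \<noteq> {}" by blast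
    show False
    proof (cases "x \<in> E1")
      case True
      then have "V \<subseteq> E1" using sub e by blast
      then show False using e by blast
    next
      case False
      then have "x \<in> E2" using e xv by blast
      then have "V \<subseteq> E2" using sub e by blast
      then show False using e by blast
    qed
  qed
qed

theorem lemma3p4:
  fixes X :: "'a topology" and Y :: "'b topology" and f :: "'a \<Rightarrow> 'b"
  assumes "alexandroff_space X"
    and "f ` topspace X \<subseteq> topspace Y"
  shows "closed_graph X Y f \<longleftrightarrow>
    (\<forall>C\<in>connected_components_of X. \<exists>y. f ` C = {y} \<and> closedin Y {y})"
proof -
  define V where "V x = \<Inter>{U. openin X U \<and> x \<in> U}" for x
  have V1: "openin X (V x)" and V2: "x \<in> V x" and V3: "\<And>U. openin X U \<Longrightarrow> x \<in> U \<Longrightarrow> V x \<subseteq> U"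
    and V4: "connectedin X (V x)" if "x \<in> topspace X" for x
  proof -
    show "openin X (V x)" unfolding V_def by (rule alex_nbhd(1)[OF assms(1) that])
    show "x \<in> V x" unfolding V_def by (rule alex_nbhd(2)[OF assms(1) that])
    show "\<And>U. openin X U \<Longrightarrow> x \<in> U \<Longrightarrow> V x \<subseteq> U" unfolding V_def
      by (rule alex_nbhd(3)[OF assms(1) that])
    show "connectedin X (V x)" unfolding V_def by (rule alex_nbhd(4)[OF assms(1) that])
  qed
  have Vt: "V x \<subseteq> topspace X" if "x \<in> topspace X" for x
    using V1[OF that] openin_subset by blast
  let ?G = "graph_of X f"
  show ?thesis
  proof
    assume cg: "closed_graph X Y f"
    then have O: "openin (prod_topology X Y) (topspace X \<times> topspace Y - ?G)"
      unfolding closed_graph_def closedin_def by simp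
    have K: "\<exists>W. openin Y W \<and> y \<in> W \<and> (\<forall>z\<in>V x. f z \<notin> W)"
      if x: "x \<in> topspace X" and y: "y \<in> topspace Y" and ne: "y \<noteq> f x" for x y
    proof -
      have "(x,y) \<in> topspace X \<times> topspace Y - ?G" using x y ne unfolding graph_of_def by auto
      from O[unfolded openin_prod_topology_alt, rule_format, OF this]
      obtain U W where UW: "openin X U" "openin Y W" "x \<in> U" "y \<in> W"
        "U \<times> W \<subseteq> topspace X \<times> topspace Y - ?G"
        by blast
      have "f z \<notin> W" if "z \<in> V x" for z
      proof
        assume "f z \<in> W"
        moreover have "z \<in> U" using V3[OF x UW(1,3)] that by blast
        ultimately have "(z, f z) \<in> U \<times> W" by blast
        moreover have "(z, f z) \<in> ?G" using Vt[OF x] that unfolding graph_of_def by blast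
        ultimately show False using UW(5) by blast
      qed
      then show ?thesis using UW by blast
    qed
    have LC: "f z = f x" if x: "x \<in> topspace X" and z: "z \<in> V x" for x z
    proof (rule ccontr)
      assume "f z \<noteq> f x"
      moreover have "f z \<in> topspace Y" using Vt[OF x] z assms(2) by blast
      ultimately obtain W where "openin Y W" "f z \<in> W" "\<forall>w\<in>V x. f w \<notin> W"
        using K[OF x] by blast
      then show False using z by blast
    qed
    have CL: "closedin Y {f x}" if x: "x \<in> topspace X" for x
    proof -
      have "openin Y (topspace Y - {f x})"
      proof (subst openin_subopen, intro ballI)
        fix y assume y: "y \<in> topspace Y - {f x}"
        then obtain W where W: "openin Y W" "y \<in> W" "\<forall>z\<in>V x. f z \<notin> W"
          using K[OF x] by blast
        then have "W \<subseteq> topspace Y - {f x}" using V2[OF x] openin_subset by blast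
        then show "\<exists>T. openin Y T \<and> y \<in> T \<and> T \<subseteq> topspace Y - {f x}" using W by blast
      qed
      then show ?thesis unfolding closedin_def using x assms(2) by blast
    qed
    show "\<forall>C\<in>connected_components_of X. \<exists>y. f ` C = {y} \<and> closedin Y {y}"
    proof
      fix C assume "C \<in> connected_components_of X"
      then obtain x where x: "x \<in> topspace X" and C: "C = connected_component_of_set X x"
        unfolding connected_components_of_def by blast
      define S where "S = {z \<in> topspace X. f z = f x}"
      have oS: "openin X S"
      proof (subst openin_subopen, intro ballI)
        fix z assume z: "z \<in> S"
        then have zt: "z \<in> topspace X" unfolding S_def by blast
        have "V z \<subseteq> S" using LC[OF zt] Vt[OF zt] z unfolding S_def by auto
        then show "\<exists>T. openin X T \<and> z \<in> T \<and> T \<subseteq> S" using V1[OF zt] V2[OF zt] by blast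
      qed
      have cS: "closedin X S"
        unfolding closedin_def
      proof (intro conjI)
        show "S \<subseteq> topspace X" unfolding S_def by blast
        show "openin X (topspace X - S)"
        proof (subst openin_subopen, intro ballI)
          fix z assume z: "z \<in> topspace X - S"
          then have zt: "z \<in> topspace X" by blast
          have "V z \<subseteq> topspace X - S" using LC[OF zt] Vt[OF zt] z unfolding S_def by auto
          then show "\<exists>T. openin X T \<and> z \<in> T \<and> T \<subseteq> topspace X - S" using V1[OF zt] V2[OF zt] by blast
        qed
      qed
      have xC: "x \<in> C" using C x connected_component_of_refl[of X x] by simp
      have "C \<subseteq> S \<or> disjnt C S"
        unfolding C by (rule connectedin_clopen_cases[OF connectedin_connected_component_of cS oS])
      moreover have "x \<in> S" using x unfolding S_def by blast
      ultimately have "C \<subseteq> S" using xC unfolding disjnt_def by blast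
      then have "f ` C = {f x}" using xC unfolding S_def by blast
      then show "\<exists>y. f ` C = {y} \<and> closedin Y {y}" using CL[OF x] by blast
    qed
  next
    assume H: "\<forall>C\<in>connected_components_of X. \<exists>y. f ` C = {y} \<and> closedin Y {y}"
    have LC: "f z = f x \<and> closedin Y {f x}" if x: "x \<in> topspace X" and z: "z \<in> V x" for x z
    proof -
      let ?C = "connected_component_of_set X x"
      have Cin: "?C \<in> connected_components_of X"
        by (rule connected_component_in_connected_components_of[THEN iffD2, OF x])
      have xC: "x \<in> ?C" using x connected_component_of_refl[of X x] by simp
      have "V x \<subseteq> ?C" using connected_component_of_maximal[OF V4[OF x] V2[OF x]] .
      then have zC: "z \<in> ?C" using z by blast
      obtain y where "f ` ?C = {y}" "closedin Y {y}" using H Cin by blast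
      then show ?thesis using xC zC by (metis image_eqI singletonD)
    qed
    have "openin (prod_topology X Y) (topspace X \<times> topspace Y - ?G)"
      unfolding openin_prod_topology_alt
    proof (intro allI impI)
      fix x y assume xy: "(x, y) \<in> topspace X \<times> topspace Y - ?G"
      then have x: "x \<in> topspace X" and y: "y \<in> topspace Y" and ne: "y \<noteq> f x"
        unfolding graph_of_def by auto
      have cl: "closedin Y {f x}" using LC[OF x V2[OF x]] by blast
      have oW: "openin Y (topspace Y - {f x})" using cl unfolding closedin_def by blast
      have "V x \<times> (topspace Y - {f x}) \<subseteq> topspace X \<times> topspace Y - ?G"
      proof
        fix p assume p: "p \<in> V x \<times> (topspace Y - {f x})"
        then obtain z w where pz: "p = (z, w)" "z \<in> V x" "w \<in> topspace Y" "w \<noteq> f x" by blast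
        have "f z = f x" using LC[OF x pz(2)] by blast
        then show "p \<in> topspace X \<times> topspace Y - ?G"
          using pz Vt[OF x] unfolding graph_of_def by auto
      qed
      then show "\<exists>U V'. openin X U \<and> openin Y V' \<and> x \<in> U \<and> y \<in> V' \<and> U \<times> V' \<subseteq> topspace X \<times> topspace Y - ?G"
        using V1[OF x] V2[OF x] oW y ne by blast
    qed
    moreover have "?G \<subseteq> topspace X \<times> topspace Y" using assms(2) unfolding graph_of_def by auto
    ultimately show "closed_graph X Y f" unfolding closed_graph_def closedin_def by simp
  qed
qed

end
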